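(* Let $r>0$. On the range $s>|r-1|$, the functional equation $f_1(s,r)+f_1(s+2r,r)=\frac{1}{s+1}$ has a unique solution satisfying $\lim_{s\to\infty}f_1(s,r)=0$, namely $$f_1(s,r)=\dfrac{1}{2-2r+2s+2\,\mathop{K}\limits_{n=1}^{\infty}\left(\dfrac{n^2r^2}{1-r+s}\right)},$$ and the functional equation $f_2(s,r)+f_2(s+2r,r)=\frac{1}{s+2r-1}$ has a unique solution satisfying $\lim_{s\to\infty}f_2(s,r)=0$, namely $$f_2(s,r)=\dfrac{1}{2r-2+2s+2\,\mathop{K}\limits_{n=1}^{\infty}\left(\dfrac{n^2r^2}{r-1+s}\right)}.$$
   Context: $\mathop{K}_{n=1}^{\infty}\left(\frac{a_n}{b}\right)$ denotes the continued fraction $\cfrac{a_1}{b+\cfrac{a_2}{b+\cdots}}$ (limit of convergents). *)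

theory Defs
  imports Complex_Main
begin

text \<open>cf_from a b m k = a_m/(b + a_(m+1)/(b + ... + a_(m+k-1)/b)) (k levels).
  The n-th convergent of K_(n>=1) (a_n / b) is cf_from a b 1 n.\<close>
fun cf_from :: "(nat \<Rightarrow> real) \<Rightarrow> real \<Rightarrow> nat \<Rightarrow> nat \<Rightarrow> real" where
  "cf_from a b m 0 = 0"
| "cf_from a b m (Suc k) = a m / (b + cf_from a b (Suc m) k)"

definition cf_convergent :: "(nat \<Rightarrow> real) \<Rightarrow> real \<Rightarrow> nat \<Rightarrow> real" where
  "cf_convergent a b n = cf_from a b 1 n"

definition cf_K :: "(nat \<Rightarrow> real) \<Rightarrow> real \<Rightarrow> real" where
  "cf_K a b = lim (cf_convergent a b)"

end

theory Submission
  imports Defs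
begin


definition gg :: "real \<Rightarrow> nat \<Rightarrow> real" where
  "gg z m = fact m / (2^(Suc m) * pochhammer z (Suc m))"

lemma poch1_ge: "(z::real) > 0 \<Longrightarrow> pochhammer (z+1) m \<ge> fact m"
proof (induction m)
  case 0 then show ?case by simp
next
  case (Suc m)
  have "pochhammer (z+1) (Suc m) = pochhammer (z+1) m * (z + 1 + of_nat m)"
    by (simp add: pochhammer_Suc)
  also have "\<dots> \<ge> fact m * (of_nat m + 1)"
    using Suc by (intro mult_mono) (auto intro: order.trans[OF _ Suc.IH])
  finally show ?case by (simp add: algebra_simps)
qed

lemma poch_ge: "(z::real) > 0 \<Longrightarrow> pochhammer z (Suc m) \<ge> z * fact m"
  using poch1_ge[of z m] by (simp add: pochhammer_rec)

lemma poch_pos: "(z::real) > 0 \<Longrightarrow> pochhammer z n > 0"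
  by (simp add: pochhammer_pos)

lemma gg_pos: "z > 0 \<Longrightarrow> gg z m > 0"
  unfolding gg_def using poch_pos[of z "Suc m"] by simp

lemma gg_le: assumes "z > 0" shows "gg z m \<le> (1/z) * (1/2)^(Suc m)"
proof -
  have p: "pochhammer z (Suc m) \<ge> z * fact m" using poch_ge[OF assms] .
  have "gg z m = fact m / (2^(Suc m) * pochhammer z (Suc m))" by (simp add: gg_def)
  also have "\<dots> \<le> fact m / (2^(Suc m) * (z * fact m))"
    using p assms poch_pos[OF assms, of "Suc m"] by (intro divide_left_mono mult_left_mono) auto
  also have "\<dots> = (1/z) * (1/2)^(Suc m)" using assms by (simp add: field_simps)
  finally show ?thesis .
qed

lemma gg_Suc: assumes "(z::real) > 0"
  shows "gg z (Suc m) = ((real m + 1) * fact m) / (2 * 2^(Suc m) * (pochhammer z (Suc m) * (z + real m + 1)))"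
proof -
  have e1: "pochhammer z (Suc (Suc m)) = pochhammer z (Suc m) * (z + real m + 1)"
    by (simp add: pochhammer_Suc add.assoc)
  show ?thesis unfolding gg_def e1 fact_Suc power_Suc[of 2 "Suc m"] by (simp add: add.commute)
qed

lemma gg_rec: assumes "z > 0" shows "2 * (z + real m + 1) * gg z (Suc m) = (real m + 1) * gg z m"
proof -
  define P where "P = pochhammer z (Suc m)"
  define X where "X = z + real m + 1"
  define F where "F = (fact m :: real)"
  define Q where "Q = (2::real)^(Suc m)"
  have P: "P > 0" unfolding P_def using poch_pos assms by blast
  have X: "X > 0" unfolding X_def using assms by simp
  have Q: "Q > 0" unfolding Q_def by simp
  have "2 * X * (((real m + 1) * F) / (2 * Q * (P * X))) = (real m + 1) * (F / (Q * P))"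
    using P X Q by (simp add: field_simps)
  then show ?thesis using gg_Suc[OF assms, of m] unfolding gg_def P_def X_def F_def Q_def by simp
qed

lemma gg_shift: assumes "z > 0" shows "gg (z+1) m = gg z m - 2 * gg z (Suc m)"
proof -
  have e1: "pochhammer z (Suc (Suc m)) = pochhammer z (Suc m) * (z + real m + 1)"
    by (simp add: pochhammer_Suc add.assoc)
  have e2: "pochhammer z (Suc (Suc m)) = z * pochhammer (z+1) (Suc m)"
    by (simp add: pochhammer_rec)
  define P where "P = pochhammer z (Suc m)"
  define X where "X = z + real m + 1"
  define F where "F = (fact m :: real)"
  define Q where "Q = (2::real)^(Suc m)"
  have P: "P > 0" unfolding P_def using poch_pos assms by blast
  have X: "X > 0" unfolding X_def using assms by simp
  have Q: "Q > 0" unfolding Q_def by simp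
  have e3: "pochhammer (z+1) (Suc m) = P * X / z" using e1 e2 assms unfolding P_def X_def
    by (simp add: field_simps)
  have "gg (z+1) m = F / (Q * (P * X / z))" unfolding gg_def e3 F_def Q_def by simp
  also have "\<dots> = F / (Q * P) * (z / X)" using P X Q assms by (simp add: field_simps)
  also have "z / X = 1 - (real m + 1) / X" using X unfolding X_def by (simp add: field_simps)
  also have "F / (Q * P) * (1 - (real m + 1) / X) = F / (Q * P) - 2 * (((real m + 1) * F) / (2 * Q * (P * X)))"
    using P X Q by (simp add: field_simps)
  also have "\<dots> = gg z m - 2 * gg z (Suc m)"
    using gg_Suc[OF assms, of m] unfolding gg_def P_def X_def F_def Q_def by simp
  finally show ?thesis .
qed

lemma poly_geo_summable: "summable (\<lambda>m. real (m+2)^p * (1/2::real)^m)"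
proof -
  define N where "N = nat \<lceil>real p / ln (3/2)\<rceil>"
  have l: "ln (3/2::real) > 0" by simp
  show ?thesis
  proof (rule summable_ratio_test[where c="3/4" and N=N])
    fix m assume "m \<ge> N"
    hence "real m \<ge> real p / ln (3/2)" unfolding N_def by linarith
    hence "real p \<le> real m * ln (3/2)" using l by (simp add: divide_le_eq)
    hence "real p \<le> real m * ln (3/2) + 2 * ln (3/2)" using l by linarith
    hence "real p \<le> (real m + 2) * ln (3/2)" by (simp add: distrib_right)
    hence mm: "real p / (real m + 2) \<le> ln (3/2)" by (simp add: divide_le_eq mult.commute)
    have "(real (Suc m + 2) / real (m+2))^p = (1 + 1/(real m + 2))^p"
      by (simp add: field_simps)
    also have "\<dots> \<le> exp (1/(real m + 2))^p"
      by (intro power_mono) (auto simp: exp_ge_add_one_self)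
    also have "\<dots> = exp (real p / (real m + 2))"
      by (simp add: exp_of_nat_mult[symmetric])
    also have "\<dots> \<le> exp (ln (3/2))" using mm by (simp only: exp_le_cancel_iff)
    also have "\<dots> = 3/2" by simp
    finally have R: "(real (Suc m + 2) / real (m+2))^p \<le> 3/2" .
    have "real (Suc m + 2)^p = (real (Suc m + 2) / real (m+2))^p * real (m+2)^p"
      by (simp add: power_divide)
    also have "\<dots> \<le> 3/2 * real (m+2)^p" using R by (intro mult_right_mono) auto
    finally have "real (Suc m + 2)^p \<le> 3/2 * real (m+2)^p" .
    then show "norm (real (Suc m + 2)^p * (1/2::real)^Suc m) \<le> 3/4 * norm (real (m + 2)^p * (1/2::real)^m)"
      by (simp add: field_simps)
  qed simp
qed

lemma summ_gg:
  assumes "z > 0" "\<And>m. \<bar>f m\<bar> \<le> C * real (m+2)^p"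
  shows "summable (\<lambda>m. f m * gg z m)"
proof (rule summable_comparison_test)
  show "summable (\<lambda>m. (C/(2*z)) * (real (m+2)^p * (1/2::real)^m))"
    by (intro summable_mult poly_geo_summable)
  show "\<exists>N. \<forall>n\<ge>N. norm (f n * gg z n) \<le> C / (2 * z) * (real (n + 2) ^ p * (1 / 2) ^ n)"
  proof (intro exI allI impI)
    fix n
    have gp: "gg z n > 0" using gg_pos[OF assms(1)] .
    have "norm (f n * gg z n) = \<bar>f n\<bar> * gg z n" using gp by (simp add: abs_mult)
    also have "\<dots> \<le> (C * real (n+2)^p) * ((1/z) * (1/2)^(Suc n))"
    proof (rule mult_mono)
      show "0 \<le> C * real (n+2)^p" using assms(2)[of n] by (meson abs_ge_zero order_trans)
    qed (use assms(2) gg_le[OF assms(1)] gp in auto)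
    also have "\<dots> = C / (2 * z) * (real (n + 2) ^ p * (1 / 2) ^ n)" by (simp add: field_simps)
    finally show "norm (f n * gg z n) \<le> C / (2 * z) * (real (n + 2) ^ p * (1 / 2) ^ n)" .
  qed
qed




lemma binom_absorb2: "Suc k * (n choose Suc k) = (n - k) * (n choose k)"
  by (metis binomial_absorption binomial_absorb_comp)

lemma binom_id: "Suc k * (m choose Suc k) + (Suc m choose k) * Suc m = (2*m+1)*(m choose k) + k*(m choose (k-1))"
proof (cases k)
  case 0 then show ?thesis by simp
next
  case (Suc j)
  have A: "Suc (Suc j) * (m choose Suc (Suc j)) = (m - Suc j) * (m choose Suc j)" by (rule binom_absorb2)
  have B: "Suc j * (m choose Suc j) = (m - j) * (m choose j)" by (rule binom_absorb2)
  have P: "Suc m choose Suc j = (m choose j) + (m choose Suc j)" by simp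
  show ?thesis
  proof (cases "m \<le> j")
    case True
    hence X: "m choose Suc j = 0" by simp
    show ?thesis
    proof (cases "m = j")
      case True then show ?thesis using Suc A X P by (simp add: binomial_eq_0)
    next
      case False then have "m choose j = 0" using \<open>m \<le> j\<close> by simp
      then show ?thesis using Suc A X P \<open>m \<le> j\<close> by (simp add: binomial_eq_0)
    qed
  next
    case False
    then obtain d where d: "m = Suc j + d" by (metis le_add_diff_inverse less_eq_Suc_le not_le)
    have B': "Suc j * (m choose Suc j) = Suc d * (m choose j)" using B d by simp
    have A': "Suc (Suc j) * (m choose Suc (Suc j)) = d * (m choose Suc j)" using A d by simp
    define X where "X = m choose Suc j"
    define Y where "Y = m choose j"
    have B'': "Suc j * X = Suc d * Y" using B' unfolding X_def Y_def .
    have "Suc k * (m choose Suc k) + (Suc m choose k) * Suc m = d * X + (Y + X) * (Suc (Suc j + d))"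
      using A' P Suc d unfolding X_def Y_def by simp
    also have "\<dots> = (2*m+1)*X + k * Y" using B'' Suc d by (simp add: algebra_simps)
    finally show ?thesis using Suc unfolding X_def Y_def by simp
  qed
qed

definition II :: "real \<Rightarrow> nat \<Rightarrow> real" where
  "II z n = (\<Sum>m. real (m choose n) * gg z m)"

lemma binom_le: "real (m choose n) \<le> real (m+2)^n"
proof (cases "n \<le> m")
  case True
  have "m choose n \<le> m^n" using binomial_le_pow[OF True] .
  also have "\<dots> \<le> (m+2)^n" by (intro power_mono) auto
  finally show ?thesis by (metis of_nat_le_iff of_nat_power)
next
  case False then show ?thesis by (simp add: binomial_eq_0 not_le)
qed

lemma summ_binom: "z > 0 \<Longrightarrow> summable (\<lambda>m. real (m choose n) * gg z m)"
  by (rule summ_gg[where C=1 and p=n]) (use binom_le in auto)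

lemma II_sums: "z > 0 \<Longrightarrow> (\<lambda>m. real (m choose n) * gg z m) sums II z n"
  unfolding II_def by (rule summable_sums[OF summ_binom])

lemma gg0: "gg z 0 = 1 / (2 * z)"
  unfolding gg_def by simp

lemma II_rec:
  assumes z: "z > 0"
  shows "real (Suc k) * II z (Suc k) + (2*z-1) * II z k - real k * II z (k-1) = (if k = 0 then 1 else 0)"
proof -
  define s4 where "s4 = (\<lambda>m. real (Suc m choose k) * real (Suc m) * gg z m)"
  define s5 where "s5 = (\<lambda>m. real (2*m+1) * real (m choose k) * gg z m)"
  have b4: "\<bar>real (Suc m choose k) * real (Suc m)\<bar> \<le> 2^k * real (m+2)^(Suc k)" for m
  proof -
    have "real (Suc m choose k) \<le> real (Suc m + 2)^k" by (rule binom_le)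
    also have "\<dots> \<le> (2 * real (m+2))^k" by (intro power_mono) auto
    finally have "real (Suc m choose k) * real (Suc m) \<le> (2 * real (m+2))^k * real (m+2)"
      by (intro mult_mono) auto
    moreover have "(2 * real (m+2))^k * real (m+2) = 2^k * real (m+2)^(Suc k)"
      by (subst power_mult_distrib) simp
    ultimately show ?thesis by (simp add: mult_ac)
  qed
  have b5: "\<bar>real (2*m+1) * real (m choose k)\<bar> \<le> 2 * real (m+2)^(Suc k)" for m
  proof -
    have "real (2*m+1) * real (m choose k) \<le> (2 * real (m+2)) * real (m+2)^k"
      using binom_le[of m k] by (intro mult_mono) auto
    then show ?thesis by (simp add: algebra_simps)
  qed
  have S4: "summable s4" unfolding s4_def using summ_gg[OF z b4] by simp
  have S5: "summable s5" unfolding s5_def using summ_gg[OF z b5] by simp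
  have h1: "(\<lambda>m. real (m choose Suc k) * gg z m) sums II z (Suc k)" by (rule II_sums[OF z])
  have h2: "(\<lambda>m. real (m choose k) * gg z m) sums II z k" by (rule II_sums[OF z])
  have h3: "(\<lambda>m. real (m choose (k-1)) * gg z m) sums II z (k-1)" by (rule II_sums[OF z])
  have h4: "s4 sums suminf s4" using S4 by (rule summable_sums)
  have h5: "s5 sums suminf s5" using S5 by (rule summable_sums)
  have pw: "real (Suc k) * (real (m choose Suc k) * gg z m) + s4 m
      = s5 m + real k * (real (m choose (k-1)) * gg z m)" for m
  proof -
    have "real (Suc k * (m choose Suc k) + (Suc m choose k) * Suc m)
        = real ((2*m+1)*(m choose k) + k*(m choose (k-1)))" using binom_id[of k m] by simp
    hence "real (Suc k) * real (m choose Suc k) + real (Suc m choose k) * real (Suc m)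
        = real (2*m+1) * real (m choose k) + real k * real (m choose (k-1))"
      by (simp only: of_nat_add of_nat_mult)
    hence "(real (Suc k) * real (m choose Suc k) + real (Suc m choose k) * real (Suc m)) * gg z m
        = (real (2*m+1) * real (m choose k) + real k * real (m choose (k-1))) * gg z m" by simp
    then show ?thesis unfolding s4_def s5_def by (simp add: algebra_simps)
  qed
  have A1: "(\<lambda>m. real (Suc k) * (real (m choose Suc k) * gg z m) + s4 m) sums (real (Suc k) * II z (Suc k) + suminf s4)"
    by (intro sums_add sums_mult h1 h4)
  have A2: "(\<lambda>m. s5 m + real k * (real (m choose (k-1)) * gg z m)) sums (suminf s5 + real k * II z (k-1))"
    by (intro sums_add sums_mult h3 h5)
  have E1: "real (Suc k) * II z (Suc k) + suminf s4 = suminf s5 + real k * II z (k-1)"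
    using sums_unique2[OF A1[unfolded pw] A2] .
  define t where "t = (\<lambda>m. if m = 0 then real (0 choose k) else real (m choose k) * real m * gg z (m-1))"
  have "(\<lambda>m. t (Suc m)) = s4" unfolding t_def s4_def by auto
  hence ht: "t sums (suminf s4 + t 0)" using h4 sums_Suc_iff by metis
  have pw2: "(2*z-1) * (real (m choose k) * gg z m) = t m - s5 m" for m
  proof (cases m)
    case 0
    have "(2*z-1) * gg z 0 = 1 - gg z 0" using z unfolding gg0 by (simp add: field_simps)
    then show ?thesis unfolding t_def s5_def 0 by (simp add: algebra_simps)
  next
    case (Suc j)
    have r: "2 * (z + real j + 1) * gg z (Suc j) = (real j + 1) * gg z j" by (rule gg_rec[OF z])
    have e: "(2*z-1) * gg z (Suc j) = (real j + 1) * gg z j - (2 * real j + 3) * gg z (Suc j)"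
      using r by (simp add: algebra_simps)
    define C where "C = real (Suc j choose k)"
    have "(2*z-1) * (C * gg z (Suc j)) = C * ((2*z-1) * gg z (Suc j))" by (simp add: mult_ac)
    also have "\<dots> = C * ((real j + 1) * gg z j - (2 * real j + 3) * gg z (Suc j))" using e by simp
    also have "\<dots> = C * real (Suc j) * gg z j - real (2 * Suc j + 1) * C * gg z (Suc j)"
      by (simp add: algebra_simps)
    finally show ?thesis unfolding t_def s5_def Suc C_def by simp
  qed
  have A3: "(\<lambda>m. (2*z-1) * (real (m choose k) * gg z m)) sums ((2*z-1) * II z k)"
    by (intro sums_mult h2)
  have A4: "(\<lambda>m. t m - s5 m) sums (suminf s4 + t 0 - suminf s5)"
    by (intro sums_diff ht h5)
  have E2: "(2*z-1) * II z k = suminf s4 + t 0 - suminf s5"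
    using sums_unique2[OF A3[unfolded pw2] A4] .
  have t0: "t 0 = (if k = 0 then 1 else 0)" unfolding t_def by simp
  show ?thesis using E1 E2 t0 by linarith
qed

lemma II_pos: "z > 0 \<Longrightarrow> II z n > 0"
  unfolding II_def
proof (rule suminf_pos2[OF summ_binom, where i=n])
  fix m assume "z > 0"
  then show "0 \<le> real (m choose n) * gg z m" using gg_pos[of z m] by simp
next
  assume "z > 0"
  then show "0 < real (n choose n) * gg z n" using gg_pos[of z n] by simp
qed

lemma II0_fe: assumes z: "z > 0" shows "II z 0 + II (z+1) 0 = 1 / z"
proof -
  have z1: "z + 1 > 0" using z by simp
  have a: "gg z sums II z 0" using II_sums[OF z, of 0] by simp
  have b: "gg (z+1) sums II (z+1) 0" using II_sums[OF z1, of 0] by simp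
  have lim: "(\<lambda>m. 2 * gg z m) \<longlonglongrightarrow> 0"
  proof -
    have "summable (gg z)" using a sums_summable by blast
    hence "gg z \<longlonglongrightarrow> 0" by (rule summable_LIMSEQ_zero)
    then show ?thesis using tendsto_mult_right_zero by blast
  qed
  have "(\<lambda>m. 2 * gg z m - 2 * gg z (Suc m)) sums (2 * gg z 0 - 0)"
    using telescope_sums'[OF lim] .
  moreover have "(\<lambda>m. 2 * gg z m - 2 * gg z (Suc m)) = (\<lambda>m. gg z m + gg (z+1) m)"
    using gg_shift[OF z] by auto
  ultimately have c: "(\<lambda>m. gg z m + gg (z+1) m) sums (1/z)" using z by (simp add: gg0)
  have "(\<lambda>m. gg z m + gg (z+1) m) sums (II z 0 + II (z+1) 0)" by (intro sums_add a b)
  then show ?thesis using c sums_unique2 by blast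
qed

lemma II0_le: "z > 0 \<Longrightarrow> II z 0 \<le> 1 / z"
  using II0_fe[of z] II_pos[of "z+1" 0] by simp




fun gt :: "(nat \<Rightarrow> real) \<Rightarrow> real \<Rightarrow> nat \<Rightarrow> nat \<Rightarrow> real \<Rightarrow> real" where
  "gt a b m 0 t = t"
| "gt a b m (Suc k) t = a m / (b + gt a b (Suc m) k t)"

lemma cf_from_gt: "cf_from a b m k = gt a b m k 0"
  by (induction k arbitrary: m) simp_all

lemma gt_nonneg: "(\<forall>n. a n \<ge> 0) \<Longrightarrow> b > 0 \<Longrightarrow> t \<ge> 0 \<Longrightarrow> gt a b m k t \<ge> 0"
proof (induction k arbitrary: m)
  case 0 then show ?case by simp
next
  case (Suc k)
  have "gt a b (Suc m) k t \<ge> 0" using Suc by blast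
  then show ?case using Suc.prems by simp
qed

lemma phi_anti: "(A::real) \<ge> 0 \<Longrightarrow> b > 0 \<Longrightarrow> 0 \<le> v \<Longrightarrow> v \<le> w \<Longrightarrow> A/(b+w) \<le> A/(b+v)"
  by (intro divide_left_mono) auto

lemma gt_between:
  assumes "\<forall>n. a n \<ge> 0" "b > 0" "t \<ge> 0"
  shows "min (gt a b m (Suc k) 0) (gt a b m k 0) \<le> gt a b m (Suc k) t \<and>
         gt a b m (Suc k) t \<le> max (gt a b m (Suc k) 0) (gt a b m k 0)"
proof (induction k arbitrary: m)
  case 0
  have "a m/(b+t) \<le> a m/(b+0)" using assms by (intro phi_anti) auto
  moreover have "0 \<le> a m/(b+t)" using assms by simp
  ultimately show ?case by simp
next
  case (Suc k)
  define x where "x = gt a b (Suc m) (Suc k) t"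
  define X where "X = gt a b (Suc m) (Suc k) 0"
  define Y where "Y = gt a b (Suc m) k 0"
  have IH: "min X Y \<le> x \<and> x \<le> max X Y" using Suc.IH[of "Suc m"] unfolding x_def X_def Y_def .
  have nn: "x \<ge> 0" "X \<ge> 0" "Y \<ge> 0" unfolding x_def X_def Y_def using gt_nonneg assms by auto
  have am: "a m \<ge> 0" using assms by simp
  have "min (a m/(b+X)) (a m/(b+Y)) \<le> a m/(b+x) \<and> a m/(b+x) \<le> max (a m/(b+X)) (a m/(b+Y))"
  proof (cases "X \<le> Y")
    case True
    hence "X \<le> x" "x \<le> Y" using IH by auto
    hence "a m/(b+x) \<le> a m/(b+X)" "a m/(b+Y) \<le> a m/(b+x)"
      using phi_anti[OF am assms(2)] nn by auto
    then show ?thesis by (simp add: min_le_iff_disj le_max_iff_disj)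
  next
    case False
    hence "Y \<le> x" "x \<le> X" using IH by auto
    hence "a m/(b+x) \<le> a m/(b+Y)" "a m/(b+X) \<le> a m/(b+x)"
      using phi_anti[OF am assms(2)] nn by auto
    then show ?thesis by (simp add: min_le_iff_disj le_max_iff_disj)
  qed
  then show ?case unfolding x_def X_def Y_def by simp
qed

lemma gt_tail:
  assumes "\<forall>n. t n = a (Suc n) / (b + t (Suc n))"
  shows "t n = gt a b (Suc n) k (t (n + k))"
proof (induction k arbitrary: n)
  case 0 then show ?case by simp
next
  case (Suc k)
  have "t (Suc n) = gt a b (Suc (Suc n)) k (t (Suc n + k))" using Suc.IH .
  moreover have "t n = a (Suc n) / (b + t (Suc n))" using assms by blast
  ultimately show ?case by simp
qed

lemma between_abs: "min A B \<le> x \<Longrightarrow> x \<le> max A B \<Longrightarrow> \<bar>B - x\<bar> \<le> \<bar>A - (B::real)\<bar>"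
  by (cases "A \<le> B") (auto simp: min_def max_def)

lemma cf_tail_conv:
  assumes a: "\<forall>n. a n \<ge> 0" and b: "b > 0" and tn: "\<forall>n. t n \<ge> 0"
    and tr: "\<forall>n. t n = a (Suc n) / (b + t (Suc n))"
    and d: "(\<lambda>N. \<bar>cf_convergent a b (Suc N) - cf_convergent a b N\<bar>) \<longlonglongrightarrow> 0"
  shows "cf_convergent a b \<longlonglongrightarrow> t 0"
proof -
  have bnd: "\<bar>cf_convergent a b N - t 0\<bar> \<le> \<bar>cf_convergent a b (Suc N) - cf_convergent a b N\<bar>" for N
  proof -
    have "t 0 = gt a b 1 (Suc N) (t (Suc N))" using gt_tail[OF tr, of 0 "Suc N"] by simp
    moreover have "min (gt a b 1 (Suc N) 0) (gt a b 1 N 0) \<le> gt a b 1 (Suc N) (t (Suc N)) \<and>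
         gt a b 1 (Suc N) (t (Suc N)) \<le> max (gt a b 1 (Suc N) 0) (gt a b 1 N 0)"
      using gt_between[OF a b] tn by blast
    ultimately have "min (cf_convergent a b (Suc N)) (cf_convergent a b N) \<le> t 0 \<and> t 0 \<le> max (cf_convergent a b (Suc N)) (cf_convergent a b N)"
      unfolding cf_convergent_def cf_from_gt by simp
    then show ?thesis using between_abs by blast
  qed
  have l1: "(\<lambda>N. t 0 - \<bar>cf_convergent a b (Suc N) - cf_convergent a b N\<bar>) \<longlonglongrightarrow> t 0 - 0"
    by (intro tendsto_intros d)
  have l2: "(\<lambda>N. t 0 + \<bar>cf_convergent a b (Suc N) - cf_convergent a b N\<bar>) \<longlonglongrightarrow> t 0 + 0"
    by (intro tendsto_intros d)
  have bnd2: "t 0 - \<bar>cf_convergent a b (Suc n) - cf_convergent a b n\<bar> \<le> cf_convergent a b n \<and>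
      cf_convergent a b n \<le> t 0 + \<bar>cf_convergent a b (Suc n) - cf_convergent a b n\<bar>" for n
  proof -
    have "cf_convergent a b n - t 0 \<le> \<bar>cf_convergent a b (Suc n) - cf_convergent a b n\<bar> \<and>
        - (cf_convergent a b n - t 0) \<le> \<bar>cf_convergent a b (Suc n) - cf_convergent a b n\<bar>"
      using bnd[of n] by (simp only: abs_le_iff)
    then show ?thesis by linarith
  qed
  show ?thesis
  proof (rule tendsto_sandwich[OF _ _ l1[simplified] l2[simplified]])
    show "\<forall>\<^sub>F n in sequentially. t 0 - \<bar>cf_convergent a b (Suc n) - cf_convergent a b n\<bar> \<le> cf_convergent a b n"
      using bnd2 by (intro always_eventually allI) blast
    show "\<forall>\<^sub>F n in sequentially. cf_convergent a b n \<le> t 0 + \<bar>cf_convergent a b (Suc n) - cf_convergent a b n\<bar>"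
      using bnd2 by (intro always_eventually allI) blast
  qed
qed

fun PP :: "(nat \<Rightarrow> real) \<Rightarrow> real \<Rightarrow> nat \<Rightarrow> real" where
  "PP a b 0 = 1"
| "PP a b (Suc 0) = 0"
| "PP a b (Suc (Suc n)) = b * PP a b (Suc n) + a (Suc n) * PP a b n"

fun QQ :: "(nat \<Rightarrow> real) \<Rightarrow> real \<Rightarrow> nat \<Rightarrow> real" where
  "QQ a b 0 = 0"
| "QQ a b (Suc 0) = 1"
| "QQ a b (Suc (Suc n)) = b * QQ a b (Suc n) + a (Suc n) * QQ a b n"

lemma gt_back: "gt a b m (Suc k) t = gt a b m k (a (m+k) / (b + t))"
  by (induction k arbitrary: m) simp_all

lemma mob_alg:
  fixes P1 P0 Q1 Q0 A b t :: real
  assumes "b + t > 0" "Q1 > 0" "Q0 \<ge> 0" "A \<ge> 0"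
  shows "(P1 + P0 * (A / (b + t))) / (Q1 + Q0 * (A / (b + t))) = ((b * P1 + A * P0) + P1 * t) / ((b * Q1 + A * Q0) + Q1 * t)"
proof -
  have d1: "Q1 + Q0 * (A / (b + t)) > 0" using assms by (simp add: add_pos_nonneg)
  have d2: "(b * Q1 + A * Q0) + Q1 * t > 0"
  proof -
    have "(b * Q1 + A * Q0) + Q1 * t = (b + t) * Q1 + A * Q0" by (simp add: algebra_simps)
    also have "\<dots> > 0" using assms by (simp add: add_pos_nonneg)
    finally show ?thesis .
  qed
  have bt: "b + t \<noteq> 0" using assms by simp
  have e1: "P1 + P0 * (A / (b + t)) = (P1 * (b + t) + P0 * A) / (b + t)" using bt by (simp add: field_simps)
  have e2: "Q1 + Q0 * (A / (b + t)) = (Q1 * (b + t) + Q0 * A) / (b + t)" using bt by (simp add: field_simps)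
  have "(P1 + P0 * (A / (b + t))) / (Q1 + Q0 * (A / (b + t))) = (P1 * (b + t) + P0 * A) / (Q1 * (b + t) + Q0 * A)"
    unfolding e1 e2 using bt by simp
  also have "\<dots> = ((b * P1 + A * P0) + P1 * t) / ((b * Q1 + A * Q0) + Q1 * t)"
    by (simp add: algebra_simps)
  finally show ?thesis .
qed

lemma gt_PQ:
  assumes a: "\<forall>n. a n \<ge> 0" and b: "b > 0" and q1: "\<forall>n. QQ a b (Suc n) > 0" and q0: "\<forall>n. QQ a b n \<ge> 0"
  shows "t \<ge> 0 \<Longrightarrow> gt a b 1 n t = (PP a b (Suc n) + PP a b n * t) / (QQ a b (Suc n) + QQ a b n * t)"
proof (induction n arbitrary: t)
  case 0 then show ?case by simp
next
  case (Suc n)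
  define s where "s = a (Suc n) / (b + t)"
  have s0: "s \<ge> 0" unfolding s_def using a b Suc.prems by simp
  have "gt a b 1 (Suc n) t = gt a b 1 n s" unfolding s_def using gt_back[of a b 1 n t] by simp
  also have "\<dots> = (PP a b (Suc n) + PP a b n * s) / (QQ a b (Suc n) + QQ a b n * s)" using Suc.IH s0 .
  also have "\<dots> = ((b * PP a b (Suc n) + a (Suc n) * PP a b n) + PP a b (Suc n) * t) /
                  ((b * QQ a b (Suc n) + a (Suc n) * QQ a b n) + QQ a b (Suc n) * t)"
    unfolding s_def using b Suc.prems q1 q0 a by (intro mob_alg) auto
  finally show ?case by simp
qed

lemma PQ_det: "PP a b (Suc n) * QQ a b n - PP a b n * QQ a b (Suc n) = (-1)^(Suc n) * (\<Prod>j\<in>{1..n}. a j)"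
proof (induction n)
  case 0 then show ?case by simp
next
  case (Suc n)
  have "PP a b (Suc (Suc n)) * QQ a b (Suc n) - PP a b (Suc n) * QQ a b (Suc (Suc n))
      = - a (Suc n) * (PP a b (Suc n) * QQ a b n - PP a b n * QQ a b (Suc n))"
    by (simp add: algebra_simps)
  also have "\<dots> = (-1)^(Suc (Suc n)) * ((\<Prod>j\<in>{1..n}. a j) * a (Suc n))" using Suc.IH by simp
  also have "(\<Prod>j\<in>{1..n}. a j) * a (Suc n) = (\<Prod>j\<in>{1..Suc n}. a j)"
    by (simp add: prod.cl_ivl_Suc)
  finally show ?case .
qed

lemma conv_PQ:
  assumes "\<forall>n. a n \<ge> 0" "b > 0" "\<forall>n. QQ a b (Suc n) > 0" "\<forall>n. QQ a b n \<ge> 0"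
  shows "cf_convergent a b n = PP a b (Suc n) / QQ a b (Suc n)"
  unfolding cf_convergent_def cf_from_gt using gt_PQ[OF assms, of 0 n] by simp

lemma delta_PQ:
  assumes "\<forall>n. a n \<ge> 0" "b > 0" "\<forall>n. QQ a b (Suc n) > 0" "\<forall>n. QQ a b n \<ge> 0"
  shows "\<bar>cf_convergent a b (Suc N) - cf_convergent a b N\<bar> =
     \<bar>\<Prod>j\<in>{1..Suc N}. a j\<bar> / (QQ a b (Suc (Suc N)) * QQ a b (Suc N))"
proof -
  define P2 where "P2 = PP a b (Suc (Suc N))"
  define P1 where "P1 = PP a b (Suc N)"
  define Q2 where "Q2 = QQ a b (Suc (Suc N))"
  define Q1 where "Q1 = QQ a b (Suc N)"
  define R where "R = (\<Prod>j\<in>{1..Suc N}. a j)"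
  have q: "Q2 > 0" "Q1 > 0" unfolding Q1_def Q2_def using assms(3) by blast+
  have det: "P2 * Q1 - P1 * Q2 = (-1)^(Suc (Suc N)) * R"
    unfolding P1_def P2_def Q1_def Q2_def R_def by (rule PQ_det)
  have c: "cf_convergent a b (Suc N) = P2 / Q2" "cf_convergent a b N = P1 / Q1"
    unfolding P1_def P2_def Q1_def Q2_def by (rule conv_PQ[OF assms])+
  have "P2 / Q2 - P1 / Q1 = (P2 * Q1 - P1 * Q2) / (Q2 * Q1)" using q by (simp add: diff_frac_eq)
  also have "\<dots> = (-1)^(Suc (Suc N)) * R / (Q2 * Q1)" by (simp only: det)
  finally have "\<bar>P2 / Q2 - P1 / Q1\<bar> = \<bar>R\<bar> / (Q2 * Q1)" using q by (simp add: abs_mult abs_divide)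
  then show ?thesis unfolding c R_def Q1_def Q2_def .
qed




fun ww :: "nat \<Rightarrow> real" where
  "ww 0 = 1"
| "ww (Suc 0) = 1"
| "ww (Suc (Suc n)) = (real n + 2) / (real n + 1) * ww n"

fun gam :: "real \<Rightarrow> nat \<Rightarrow> real" where
  "gam c 0 = 1"
| "gam c (Suc 0) = c"
| "gam c (Suc (Suc n)) = gam c n + c / (ww (Suc (Suc n)))^2 * gam c (Suc n)"

lemma ww_pos: "ww n > 0"
  by (induction n rule: ww.induct) auto

lemma ww_mult: "ww (Suc n) * ww n = real n + 1"
proof (induction n)
  case 0 then show ?case by simp
next
  case (Suc n)
  have "ww (Suc (Suc n)) * ww (Suc n) = (real n + 2) / (real n + 1) * (ww (Suc n) * ww n)" by simp
  also have "\<dots> = real n + 2" using Suc.IH by simp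
  finally show ?case by simp
qed

lemma ww_sq: "(ww n)^2 \<le> 2 * real n + 1"
proof (induction n rule: ww.induct)
  case 1 then show ?case by simp
next
  case 2 then show ?case by simp
next
  case (3 n)
  have "(ww (Suc (Suc n)))^2 = ((real n + 2) / (real n + 1))^2 * (ww n)^2"
    unfolding ww.simps by (rule power_mult_distrib)
  also have "\<dots> \<le> ((real n + 2) / (real n + 1))^2 * (2 * real n + 1)"
    using 3 by (intro mult_left_mono) auto
  also have "\<dots> \<le> 2 * real (Suc (Suc n)) + 1"
  proof -
    have h: "(real n + 2)^2 * (2 * real n + 1) \<le> (2 * real n + 5) * (real n + 1)^2"
      by (simp add: power2_eq_square algebra_simps)
    have "((real n + 2) / (real n + 1))^2 * (2 * real n + 1) = (real n + 2)^2 * (2 * real n + 1) / (real n + 1)^2"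
      by (simp add: power_divide)
    also have "\<dots> \<le> 2 * real n + 5" using h by (simp add: pos_divide_le_eq)
    finally show ?thesis by simp
  qed
  finally show ?case .
qed

lemma gam_ge2: assumes c: "c > 0" shows "gam c n \<ge> min 1 c \<and> gam c (Suc n) \<ge> min 1 c"
proof (induction n)
  case 0 then show ?case by simp
next
  case (Suc n)
  have m: "min 1 c > 0" using c by simp
  have "c / (ww (Suc (Suc n)))^2 * gam c (Suc n) \<ge> 0"
    using Suc.IH m c ww_pos[of "Suc (Suc n)"] by (intro mult_nonneg_nonneg) auto
  then have "gam c (Suc (Suc n)) \<ge> gam c n" by simp
  then show ?case using Suc.IH by linarith
qed

lemma gam_ge: "c > 0 \<Longrightarrow> gam c n \<ge> min 1 c"
  using gam_ge2 by blast

lemma ln_step: "ln (real n + 3) - ln (real n + 2) \<le> 4 / (2 * real n + 5)"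
proof -
  have "ln (real n + 3) - ln (real n + 2) = ln ((real n + 3) / (real n + 2))"
    by (simp add: ln_div)
  also have "\<dots> \<le> (real n + 3) / (real n + 2) - 1" by (rule ln_le_minus_one) simp
  also have "\<dots> = 1 / (real n + 2)" by (simp add: field_simps)
  also have "\<dots> \<le> 4 / (2 * real n + 5)" by (simp add: field_simps)
  finally show ?thesis .
qed

lemma gam_sigma:
  assumes c: "c > 0"
  shows "gam c (Suc n) + gam c n \<ge> (c * min 1 c / 4) * (ln (real n + 2) - ln 2)"
proof (induction n)
  case 0 then show ?case using c by simp
next
  case (Suc n)
  define m where "m = min 1 c"
  have m: "m > 0" "gam c (Suc n) \<ge> m" unfolding m_def using c gam_ge[OF c] by auto
  have w: "(ww (Suc (Suc n)))^2 \<le> 2 * real n + 5" "(ww (Suc (Suc n)))^2 > 0"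
    using ww_sq[of "Suc (Suc n)"] ww_pos[of "Suc (Suc n)"] by auto
  have "c / (2 * real n + 5) * m \<le> c / (ww (Suc (Suc n)))^2 * gam c (Suc n)"
  proof (rule mult_mono)
    show "c / (2 * real n + 5) \<le> c / (ww (Suc (Suc n)))^2"
      using w c by (intro divide_left_mono) auto
  qed (use m c w in auto)
  moreover have "(c * m / 4) * (ln (real (Suc n) + 2) - ln (real n + 2)) \<le> c / (2 * real n + 5) * m"
  proof -
    have "ln (real (Suc n) + 2) - ln (real n + 2) \<le> 4 / (2 * real n + 5)"
      using ln_step[of n] by (simp add: add.commute add.left_commute)
    hence "(c * m / 4) * (ln (real (Suc n) + 2) - ln (real n + 2)) \<le> (c * m / 4) * (4 / (2 * real n + 5))"
      using c m by (intro mult_left_mono) auto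
    then show ?thesis by (simp add: field_simps)
  qed
  moreover have "gam c (Suc (Suc n)) + gam c (Suc n) = (gam c (Suc n) + gam c n) + c / (ww (Suc (Suc n)))^2 * gam c (Suc n)"
    by simp
  ultimately have "gam c (Suc (Suc n)) + gam c (Suc n) \<ge> (c * m / 4) * (ln (real n + 2) - ln 2) + (c * m / 4) * (ln (real (Suc n) + 2) - ln (real n + 2))"
    using Suc.IH unfolding m_def by linarith
  also have "(c * m / 4) * (ln (real n + 2) - ln 2) + (c * m / 4) * (ln (real (Suc n) + 2) - ln (real n + 2))
      = (c * m / 4) * (ln (real (Suc n) + 2) - ln 2)" by (simp add: algebra_simps)
  finally show ?case unfolding m_def .
qed

lemma QQ_alg:
  fixes W2 r b F0 G0 G1 n1 :: real and n :: nat
  assumes W: "W2 > 0" and r: "r > 0" and n: "n1 > 0"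
  shows "b * (n1 * F0 * r^(Suc n) * ((n1+1)/W2) * G1) + (n1+1)^2 * r^2 * (F0 * r^n * (n1 * W2/(n1+1)) * G0)
       = (n1+1) * n1 * F0 * r^(Suc (Suc n)) * W2 * (G0 + (b/r)/W2^2 * G1)"
proof -
  have t1: "b * (n1 * F0 * r^(Suc n) * ((n1+1)/W2) * G1) = (n1+1) * n1 * F0 * r^(Suc n) * b * G1 / W2"
    using W by (simp add: field_simps)
  have t2: "(n1+1)^2 * r^2 * (F0 * r^n * (n1 * W2/(n1+1)) * G0) = (n1+1) * n1 * F0 * r^(Suc (Suc n)) * W2 * G0"
    using n by (simp add: field_simps power2_eq_square)
  have t3: "(n1+1) * n1 * F0 * r^(Suc (Suc n)) * W2 * (G0 + (b/r)/W2^2 * G1)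
      = (n1+1) * n1 * F0 * r^(Suc (Suc n)) * W2 * G0 + (n1+1) * n1 * F0 * r^(Suc n) * b * G1 / W2"
    using W r by (simp add: field_simps power2_eq_square)
  show ?thesis unfolding t1 t2 t3 by simp
qed

abbreviation "asq r \<equiv> (\<lambda>n::nat. (real n)^2 * r^2)"

lemma QQ_formula:
  assumes r: "r > 0"
  shows "QQ (asq r) b (Suc n) = fact n * r^n * ww n * gam (b/r) n \<and>
         QQ (asq r) b (Suc (Suc n)) = fact (Suc n) * r^(Suc n) * ww (Suc n) * gam (b/r) (Suc n)"
proof (induction n)
  case 0 then show ?case using r by simp
next
  case (Suc n)
  have I1: "QQ (asq r) b (Suc n) = fact n * r^n * ww n * gam (b/r) n" using Suc.IH by blast
  have I2: "QQ (asq r) b (Suc (Suc n)) = fact (Suc n) * r^(Suc n) * ww (Suc n) * gam (b/r) (Suc n)"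
    using Suc.IH by blast
  define W2 where "W2 = ww (Suc (Suc n))"
  define G0 where "G0 = gam (b/r) n"
  define G1 where "G1 = gam (b/r) (Suc n)"
  have W2: "W2 > 0" unfolding W2_def using ww_pos by simp
  have W1: "ww (Suc n) = ((real n + 1) + 1) / W2" unfolding W2_def
    using ww_mult[of "Suc n"] ww_pos[of "Suc (Suc n)"] by (simp add: field_simps)
  have W0: "ww n = (real n + 1) * W2 / ((real n + 1) + 1)"
  proof -
    have a: "real n + 1 \<noteq> 0" "real n + 2 \<noteq> 0" by simp_all
    have "(real n + 1) * ((real n + 2) / (real n + 1) * ww n) = (real n + 2) * ww n" using a by simp
    then show ?thesis unfolding W2_def ww.simps using a by (simp add: add.assoc)
  qed
  have fS: "fact (Suc n) = (real n + 1) * fact n" by simp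
  have fSS: "fact (Suc (Suc n)) = ((real n + 1) + 1) * (real n + 1) * fact n" by simp
  have rS: "real (Suc (Suc n)) = (real n + 1) + 1" by simp
  have gS: "gam (b/r) (Suc (Suc n)) = G0 + (b/r)/W2^2 * G1" unfolding G0_def G1_def W2_def by simp
  have "QQ (asq r) b (Suc (Suc (Suc n))) = b * QQ (asq r) b (Suc (Suc n)) + (real (Suc (Suc n)))^2 * r^2 * QQ (asq r) b (Suc n)"
    by (simp only: QQ.simps)
  also have "\<dots> = b * (fact (Suc n) * r^(Suc n) * ww (Suc n) * G1) + (real (Suc (Suc n)))^2 * r^2 * (fact n * r^n * ww n * G0)"
    unfolding G0_def G1_def by (simp only: I1 I2)
  also have "\<dots> = b * ((real n + 1) * fact n * r^(Suc n) * (((real n + 1)+1)/W2) * G1)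
      + ((real n + 1)+1)^2 * r^2 * (fact n * r^n * ((real n + 1) * W2/((real n + 1)+1)) * G0)"
    by (simp only: fS rS W1 W0)
  also have "\<dots> = ((real n + 1)+1) * (real n + 1) * fact n * r^(Suc (Suc n)) * W2 * (G0 + (b/r)/W2^2 * G1)"
    by (rule QQ_alg[OF W2 r]) simp
  also have "\<dots> = fact (Suc (Suc n)) * r^(Suc (Suc n)) * ww (Suc (Suc n)) * gam (b/r) (Suc (Suc n))"
    unfolding fSS gS W2_def ..
  finally show ?case using I2 by blast
qed

lemma prod_asq: "(\<Prod>j\<in>{1..n}. asq r j) = (fact n * r^n)^2"
proof (induction n)
  case 0 then show ?case by simp
next
  case (Suc n)
  have "(\<Prod>j\<in>{1..Suc n}. asq r j) = (\<Prod>j\<in>{1..n}. asq r j) * asq r (Suc n)"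
    by (simp add: prod.cl_ivl_Suc)
  also have "\<dots> = (fact n * r^n)^2 * ((real n + 1) * r)^2" using Suc.IH by (simp add: power_mult_distrib)
  also have "\<dots> = (fact n * r^n * ((real n + 1) * r))^2" by (simp only: power_mult_distrib)
  also have "fact n * r^n * ((real n + 1) * r) = fact (Suc n) * r^(Suc n)" by (simp add: algebra_simps)
  finally show ?case .
qed




lemma QQ_pos:
  assumes r: "r > 0" and b: "b > 0"
  shows "QQ (asq r) b (Suc n) > 0"
proof -
  have "gam (b/r) n \<ge> min 1 (b/r)" using gam_ge[of "b/r"] r b by simp
  moreover have "min 1 (b/r) > 0" using r b by simp
  ultimately have "gam (b/r) n > 0" by linarith
  then show ?thesis using QQ_formula[OF r, of b n] ww_pos[of n] r by simp
qed

lemma QQ_nonneg: "r > 0 \<Longrightarrow> b > 0 \<Longrightarrow> QQ (asq r) b n \<ge> 0"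
  by (cases n) (auto dest: QQ_pos[of r b] intro: less_imp_le)

lemma asq_nonneg: "\<forall>n. asq r n \<ge> 0" by simp

lemma alg2:
  fixes n1 r F0 W0 W1 G0 G1 :: real
  assumes "n1 > 0" "r > 0" "F0 > 0" "W0 > 0" "W1 > 0" "G0 > 0" "G1 > 0"
  shows "(n1 * r * F0)^2 / (n1 * r * F0 * W1 * G1 * (F0 * W0 * G0)) = n1 * r / ((W1 * W0) * G1 * G0)"
  using assms by (simp add: field_simps power2_eq_square)

lemma alg3:
  fixes n1 r I J :: real
  assumes "n1 > 0" "r > 0" "I > 0" "J > 0"
  shows "n1^2 * r^2 / (r * n1 * I / J) = n1 * r * J / I"
  using assms by (simp add: field_simps power2_eq_square)

lemma alg4:
  fixes n1 r G0 G1 :: real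
  assumes "n1 \<noteq> 0"
  shows "n1 * r / (n1 * G1 * G0) = r / (G1 * G0)"
  using assms by (simp add: mult.assoc)

lemma delta_formula:
  assumes r: "r > 0" and b: "b > 0"
  shows "\<bar>cf_convergent (asq r) b (Suc N) - cf_convergent (asq r) b N\<bar> = r / (gam (b/r) (Suc N) * gam (b/r) N)"
proof -
  have d: "\<bar>cf_convergent (asq r) b (Suc N) - cf_convergent (asq r) b N\<bar> =
     \<bar>\<Prod>j\<in>{1..Suc N}. asq r j\<bar> / (QQ (asq r) b (Suc (Suc N)) * QQ (asq r) b (Suc N))"
    by (rule delta_PQ) (use QQ_pos[OF r b] QQ_nonneg[OF r b] b in auto)
  define F0 where "F0 = fact N * r^N"
  define W0 where "W0 = ww N"
  define W1 where "W1 = ww (Suc N)"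
  define G0 where "G0 = gam (b/r) N"
  define G1 where "G1 = gam (b/r) (Suc N)"
  have F1: "fact (Suc N) * r^(Suc N) = (real N + 1) * r * F0" unfolding F0_def by (simp add: algebra_simps)
  have WW: "W1 * W0 = real N + 1" unfolding W0_def W1_def by (rule ww_mult)
  have F0p: "F0 > 0" unfolding F0_def using r by simp
  have Wp: "W0 > 0" "W1 > 0" unfolding W0_def W1_def using ww_pos by auto
  have Gp: "G0 > 0" "G1 > 0" unfolding G0_def G1_def using gam_ge[of "b/r"] r b
    by (smt (verit) divide_pos_pos)+
  have Q1: "QQ (asq r) b (Suc N) = F0 * W0 * G0" using QQ_formula[OF r, of b N] unfolding F0_def W0_def G0_def by simp
  have q2: "QQ (asq r) b (Suc (Suc N)) = fact (Suc N) * r^(Suc N) * ww (Suc N) * gam (b/r) (Suc N)"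
    using QQ_formula[OF r, of b N] by blast
  have Q2: "QQ (asq r) b (Suc (Suc N)) = (real N + 1) * r * F0 * W1 * G1"
    unfolding W1_def G1_def by (simp only: q2 F1)
  have P: "\<bar>\<Prod>j\<in>{1..Suc N}. asq r j\<bar> = ((real N + 1) * r * F0)^2"
    unfolding prod_asq F1[symmetric] by simp
  have "((real N + 1) * r * F0)^2 / ((real N + 1) * r * F0 * W1 * G1 * (F0 * W0 * G0))
      = (real N + 1) * r / ((W1 * W0) * G1 * G0)"
    by (rule alg2) (use F0p Wp Gp r in auto)
  also have "\<dots> = r / (G1 * G0)" unfolding WW by (rule alg4) simp
  finally show ?thesis unfolding d P Q1 Q2 G0_def G1_def .
qed

lemma delta_lim:
  assumes r: "r > 0" and b: "b > 0"
  shows "(\<lambda>N. \<bar>cf_convergent (asq r) b (Suc N) - cf_convergent (asq r) b N\<bar>) \<longlonglongrightarrow> 0"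
proof -
  define c where "c = b / r"
  have c: "c > 0" unfolding c_def using r b by simp
  define m where "m = min 1 c"
  have m: "m > 0" unfolding m_def using c by simp
  define K where "K = c * m / 4"
  have K: "K > 0" unfolding K_def using c m by simp
  have f1: "filterlim (\<lambda>N::nat. real N + 2) at_top sequentially"
    using filterlim_tendsto_add_at_top[OF tendsto_const[of 2] filterlim_real_sequentially] by (simp add: add.commute)
  have f2: "filterlim (\<lambda>N. ln (real N + 2)) at_top sequentially"
    using filterlim_compose[OF ln_at_top f1] .
  have f3: "filterlim (\<lambda>N. ln (real N + 2) - ln 2) at_top sequentially"
    using filterlim_tendsto_add_at_top[OF tendsto_const[of "- ln 2"] f2] by simp
  have lim: "(\<lambda>N. (2 * r / (m * K)) * inverse (ln (real N + 2) - ln 2)) \<longlonglongrightarrow> 0"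
    using tendsto_inverse_0_at_top[OF f3] tendsto_mult_right_zero by blast
  have bound: "\<bar>cf_convergent (asq r) b (Suc N) - cf_convergent (asq r) b N\<bar> \<le> (2 * r / (m * K)) * inverse (ln (real N + 2) - ln 2)"
    if N: "N \<ge> 1" for N
  proof -
    define x where "x = gam c (Suc N)"
    define y where "y = gam c N"
    have xm: "x \<ge> m" "y \<ge> m" unfolding x_def y_def m_def using gam_ge[OF c] by auto
    have L: "ln (real N + 2) - ln 2 > 0" using N by simp
    have sig: "x + y \<ge> K * (ln (real N + 2) - ln 2)" unfolding x_def y_def K_def m_def
      using gam_sigma[OF c, of N] by simp
    have "x * y \<ge> m * x" "x * y \<ge> m * y" using xm m by (simp_all add: mult_right_mono mult_left_mono)
    hence xy: "x * y \<ge> m * (x + y) / 2" by (simp add: algebra_simps)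
    define L where "L = ln (real N + 2) - ln 2"
    have "m * (K * L) \<le> m * (x + y)" using sig m unfolding L_def by (intro mult_left_mono) auto
    hence xy2: "x * y \<ge> m * (K * L) / 2" using xy by linarith
    have pos: "m * (K * L) / 2 > 0" using m K L unfolding L_def by simp
    have "\<bar>cf_convergent (asq r) b (Suc N) - cf_convergent (asq r) b N\<bar> = r / (x * y)"
      unfolding x_def y_def c_def by (rule delta_formula[OF r b])
    also have "\<dots> \<le> r / (m * (K * L) / 2)"
      using xy2 pos r by (intro divide_left_mono) auto
    also have "\<dots> = (2 * r / (m * K)) * inverse L"
      using m K L unfolding L_def by (simp add: field_simps)
    finally show ?thesis unfolding L_def .
  qed
  show ?thesis
  proof (rule tendsto_sandwich[OF _ _ tendsto_const lim])
    show "\<forall>\<^sub>F n in sequentially. 0 \<le> \<bar>cf_convergent (asq r) b (Suc n) - cf_convergent (asq r) b n\<bar>" by simp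
    show "\<forall>\<^sub>F n in sequentially. \<bar>cf_convergent (asq r) b (Suc n) - cf_convergent (asq r) b n\<bar> \<le> 2 * r / (m * K) * inverse (ln (real n + 2) - ln 2)"
      using bound by (intro eventually_sequentiallyI[of 1]) auto
  qed
qed

lemma cf_main:
  assumes r: "r > 0" and b: "b > 0"
  shows "cf_convergent (asq r) b \<longlonglongrightarrow> r / II ((b + r) / (2 * r)) 0 - b"
proof -
  define z where "z = (b + r) / (2 * r)"
  have z: "z > 0" unfolding z_def using r b by simp
  have bz: "b = r * (2 * z - 1)" unfolding z_def using r by (simp add: field_simps)
  define t where "t = (\<lambda>n. (if n = 0 then r / II z 0 else r * real n * II z (n-1) / II z n) - b)"
  have Ip: "II z n > 0" for n using II_pos[OF z] .
  have tS: "b + t (Suc n) = r * (real n + 1) * II z n / II z (Suc n)" for n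
    unfolding t_def by simp
  have tS_pos: "b + t (Suc n) > 0" for n unfolding tS using r Ip by simp
  have t_eq: "t n = (real n + 1) * r * II z (Suc n) / II z n" for n
  proof -
    have rec: "real (Suc n) * II z (Suc n) + (2*z-1) * II z n - real n * II z (n-1) = (if n = 0 then 1 else 0)"
      by (rule II_rec[OF z])
    have "(real n + 1) * r * II z (Suc n) / II z n = r * ((real (Suc n) * II z (Suc n)) / II z n)"
      by (simp add: algebra_simps)
    also have "real (Suc n) * II z (Suc n) = (if n = 0 then 1 else 0) - (2*z-1) * II z n + real n * II z (n-1)"
      using rec by linarith
    also have "r * (((if n = 0 then 1 else 0) - (2*z-1) * II z n + real n * II z (n-1)) / II z n)
        = r * (if n = 0 then 1 else 0) / II z n - b + r * real n * II z (n-1) / II z n"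
      using Ip[of n] r by (simp add: bz field_simps)
    also have "\<dots> = t n" unfolding t_def by (cases "n = 0") auto
    finally show ?thesis by simp
  qed
  have tr: "\<forall>n. t n = asq r (Suc n) / (b + t (Suc n))"
  proof
    fix n
    have as: "asq r (Suc n) = (real n + 1)^2 * r^2" by simp
    have "asq r (Suc n) / (b + t (Suc n)) = (real n + 1)^2 * r^2 / (r * (real n + 1) * II z n / II z (Suc n))"
      unfolding tS as ..
    also have "\<dots> = (real n + 1) * r * II z (Suc n) / II z n"
      by (rule alg3) (use r Ip in auto)
    finally show "t n = asq r (Suc n) / (b + t (Suc n))" using t_eq by simp
  qed
  have tn: "\<forall>n. t n \<ge> 0"
  proof
    fix n show "t n \<ge> 0" using tr tS_pos[of n] by (metis asq_nonneg divide_nonneg_pos)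
  qed
  have "cf_convergent (asq r) b \<longlonglongrightarrow> t 0"
    by (rule cf_tail_conv[OF asq_nonneg b tn tr delta_lim[OF r b]])
  then show ?thesis unfolding t_def z_def by simp
qed




lemma F_formula:
  assumes r: "r > 0" and b: "b > 0"
  shows "convergent (cf_convergent (asq r) b) \<and>
         1 / (2*b + 2 * cf_K (asq r) b) = II ((b + r) / (2*r)) 0 / (2*r)"
proof -
  have L: "cf_convergent (asq r) b \<longlonglongrightarrow> r / II ((b + r) / (2 * r)) 0 - b" by (rule cf_main[OF r b])
  have K: "cf_K (asq r) b = r / II ((b + r) / (2 * r)) 0 - b" unfolding cf_K_def using L by (rule limI)
  have z: "(b + r) / (2*r) > 0" using r b by simp
  have I: "II ((b + r) / (2*r)) 0 > 0" by (rule II_pos[OF z])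
  have "1 / (2*b + 2 * cf_K (asq r) b) = 1 / (2 * r / II ((b + r) / (2*r)) 0)" unfolding K by (simp add: algebra_simps)
  also have "\<dots> = II ((b + r) / (2*r)) 0 / (2*r)" using I r by simp
  finally show ?thesis using L convergentI by blast
qed

lemma uniq:
  fixes f F g :: "real \<Rightarrow> real" and r A :: real
  assumes r: "r > 0"
    and hf: "\<forall>s>A. f s + f (s + 2*r) = g s" and hF: "\<forall>s>A. F s + F (s + 2*r) = g s"
    and lf: "(f \<longlongrightarrow> 0) at_top" and lF: "(F \<longlongrightarrow> 0) at_top"
  shows "\<forall>s>A. f s = F s"
proof (intro allI impI)
  fix s assume s: "s > A"
  define h where "h = (\<lambda>x. f x - F x)"
  have hr: "h (x + 2*r) = - h x" if "x > A" for x
    using hf hF that unfolding h_def by (smt (verit))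
  have habs: "\<bar>h (s + 2*r*real n)\<bar> = \<bar>h s\<bar>" for n
  proof (induction n)
    case 0 then show ?case by simp
  next
    case (Suc n)
    have gt: "s + 2*r*real n > A" using s r by (smt (verit) mult_nonneg_nonneg of_nat_0_le_iff)
    have e: "s + 2*r*real (Suc n) = (s + 2*r*real n) + 2*r" by (simp add: algebra_simps)
    have "h (s + 2*r*real (Suc n)) = - h (s + 2*r*real n)" unfolding e by (rule hr[OF gt])
    then show ?case using Suc.IH by simp
  qed
  have lh: "(h \<longlongrightarrow> 0) at_top" unfolding h_def using tendsto_diff[OF lf lF] by simp
  have fl: "filterlim (\<lambda>n::nat. 2*r*real n) at_top sequentially"
    using filterlim_tendsto_pos_mult_at_top[OF tendsto_const[of "2*r"] _ filterlim_real_sequentially] r by simp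
  have fl2: "filterlim (\<lambda>n::nat. s + 2*r*real n) at_top sequentially"
    using filterlim_tendsto_add_at_top[OF tendsto_const[of s] fl] .
  have "(\<lambda>n. h (s + 2*r*real n)) \<longlonglongrightarrow> 0"
    using filterlim_compose[OF lh fl2] .
  then have "(\<lambda>n. \<bar>h (s + 2*r*real n)\<bar>) \<longlonglongrightarrow> \<bar>0\<bar>" by (rule tendsto_rabs)
  then have "(\<lambda>n. \<bar>h s\<bar>) \<longlonglongrightarrow> 0" unfolding habs by simp
  then have "\<bar>h s\<bar> = 0" using LIMSEQ_const_iff by blast
  then show "f s = F s" unfolding h_def by simp
qed

lemma alg5: "(r::real) > 0 \<Longrightarrow> D > 0 \<Longrightarrow> (1 / (D / (2*r))) / (2*r) = inverse D"
  by (simp add: field_simps)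

lemma gen:
  fixes r e :: real and g F :: "real \<Rightarrow> real"
  assumes r: "r > 0" and pos: "\<And>s. s > \<bar>r - 1\<bar> \<Longrightarrow> e + s > 0"
    and hg: "\<And>s. g s = 1 / (e + s + r)"
    and hF: "\<And>s. F s = 1 / (2*e + 2*s + 2 * cf_K (asq r) (e + s))"
  shows "(\<forall>s>\<bar>r - 1\<bar>. convergent (cf_convergent (asq r) (e + s))) \<and>
         ((\<forall>s>\<bar>r - 1\<bar>. F s + F (s + 2*r) = g s) \<and> (F \<longlongrightarrow> 0) at_top \<and>
          (\<forall>f :: real \<Rightarrow> real. (\<forall>s>\<bar>r - 1\<bar>. f s + f (s + 2*r) = g s) \<and> (f \<longlongrightarrow> 0) at_top
             \<longrightarrow> (\<forall>s>\<bar>r - 1\<bar>. f s = F s)))"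
proof -
  have Fs: "F s = II ((e + s + r) / (2*r)) 0 / (2*r)" and cv: "convergent (cf_convergent (asq r) (e + s))"
    if s: "s > \<bar>r - 1\<bar>" for s
  proof -
    have b: "e + s > 0" using pos[OF s] .
    have "2*e + 2*s = 2 * (e + s)" by simp
    then show "F s = II ((e + s + r) / (2*r)) 0 / (2*r)" using F_formula[OF r b] hF[of s] by simp
    show "convergent (cf_convergent (asq r) (e + s))" using F_formula[OF r b] by blast
  qed
  have eq: "F s + F (s + 2*r) = g s" if s: "s > \<bar>r - 1\<bar>" for s
  proof -
    have s2: "s + 2*r > \<bar>r - 1\<bar>" using s r by simp
    define z where "z = (e + s + r) / (2*r)"
    have z: "z > 0" unfolding z_def using pos[OF s] r by simp
    have z1: "(e + (s + 2*r) + r) / (2*r) = z + 1" unfolding z_def using r by (simp add: field_simps)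
    have "F s + F (s + 2*r) = (II z 0 + II (z+1) 0) / (2*r)"
      unfolding Fs[OF s] Fs[OF s2] z1 z_def by (simp add: add_divide_distrib)
    also have "\<dots> = 1 / (2 * r * z)" using II0_fe[OF z] by simp
    also have "\<dots> = g s" unfolding hg z_def using r by simp
    finally show ?thesis .
  qed
  have lim: "(F \<longlongrightarrow> 0) at_top"
  proof -
    have l0: "((\<lambda>x. inverse ((e + r) + x)) \<longlongrightarrow> 0) at_top"
      by (rule tendsto_inverse_0_at_top[OF filterlim_tendsto_add_at_top[OF tendsto_const filterlim_ident]])
    have ev: "eventually (\<lambda>s. s > \<bar>r - 1\<bar>) at_top" by (rule eventually_gt_at_top)
    show ?thesis
    proof (rule tendsto_sandwich[OF _ _ tendsto_const l0])
      show "\<forall>\<^sub>F s in at_top. 0 \<le> F s"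
        using ev
      proof (rule eventually_mono)
        fix s assume s: "s > \<bar>r - 1\<bar>"
        have "(e + s + r) / (2*r) > 0" using pos[OF s] r by simp
        then show "0 \<le> F s" unfolding Fs[OF s] using II_pos r by (simp add: less_imp_le)
      qed
      show "\<forall>\<^sub>F s in at_top. F s \<le> inverse ((e + r) + s)"
        using ev
      proof (rule eventually_mono)
        fix s assume s: "s > \<bar>r - 1\<bar>"
        define z where "z = (e + s + r) / (2*r)"
        have z: "z > 0" unfolding z_def using pos[OF s] r by simp
        have "F s = II z 0 / (2*r)" unfolding Fs[OF s] z_def ..
        also have "\<dots> \<le> (1/z) / (2*r)" by (rule divide_right_mono[OF II0_le[OF z]]) (use r in simp)
        also have "\<dots> = inverse (e + s + r)" unfolding z_def
          by (rule alg5) (use r pos[OF s] in auto)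
        also have "\<dots> = inverse ((e + r) + s)" by (simp add: add_ac)
        finally show "F s \<le> inverse ((e + r) + s)" .
      qed
    qed
  qed
  have un: "\<forall>f :: real \<Rightarrow> real. (\<forall>s>\<bar>r - 1\<bar>. f s + f (s + 2*r) = g s) \<and> (f \<longlongrightarrow> 0) at_top
             \<longrightarrow> (\<forall>s>\<bar>r - 1\<bar>. f s = F s)"
  proof (rule allI, rule impI)
    fix f :: "real \<Rightarrow> real"
    assume "(\<forall>s>\<bar>r - 1\<bar>. f s + f (s + 2*r) = g s) \<and> (f \<longlongrightarrow> 0) at_top"
    then show "\<forall>s>\<bar>r - 1\<bar>. f s = F s"
      using uniq[OF r _ _ _ lim, of "\<bar>r - 1\<bar>" f g] eq by blast
  qed
  show ?thesis using cv eq lim un by blast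
qed


theorem corollary3:
  fixes r :: real
  assumes "r > 0"
  shows
   "(\<forall>s>\<bar>r - 1\<bar>. convergent (cf_convergent (\<lambda>n. (real n)^2 * r^2) (1 - r + s))) \<and>
    (let F1 = (\<lambda>s. 1 / (2 - 2*r + 2*s + 2 * cf_K (\<lambda>n. (real n)^2 * r^2) (1 - r + s))) in
      (\<forall>s>\<bar>r - 1\<bar>. F1 s + F1 (s + 2*r) = 1 / (s + 1)) \<and> (F1 \<longlongrightarrow> 0) at_top \<and>
      (\<forall>f :: real \<Rightarrow> real.
          (\<forall>s>\<bar>r - 1\<bar>. f s + f (s + 2*r) = 1 / (s + 1)) \<and> (f \<longlongrightarrow> 0) at_top
          \<longrightarrow> (\<forall>s>\<bar>r - 1\<bar>. f s = F1 s))) \<and>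
    (\<forall>s>\<bar>r - 1\<bar>. convergent (cf_convergent (\<lambda>n. (real n)^2 * r^2) (r - 1 + s))) \<and>
    (let F2 = (\<lambda>s. 1 / (2*r - 2 + 2*s + 2 * cf_K (\<lambda>n. (real n)^2 * r^2) (r - 1 + s))) in
      (\<forall>s>\<bar>r - 1\<bar>. F2 s + F2 (s + 2*r) = 1 / (s + 2*r - 1)) \<and> (F2 \<longlongrightarrow> 0) at_top \<and>
      (\<forall>f :: real \<Rightarrow> real.
          (\<forall>s>\<bar>r - 1\<bar>. f s + f (s + 2*r) = 1 / (s + 2*r - 1)) \<and> (f \<longlongrightarrow> 0) at_top
          \<longrightarrow> (\<forall>s>\<bar>r - 1\<bar>. f s = F2 s)))"
  proof -
  have pos1: "(1 - r) + s > 0" if "s > \<bar>r - 1\<bar>" for s using that by linarith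
  have pos2: "(r - 1) + s > 0" if "s > \<bar>r - 1\<bar>" for s using that by linarith
  note G1 = gen[where r=r and e="1 - r" and g="\<lambda>s. 1 / (s + 1)" and
      F="\<lambda>s. 1 / (2 - 2*r + 2*s + 2 * cf_K (\<lambda>n. (real n)^2 * r^2) (1 - r + s))"]
  note G2 = gen[where r=r and e="r - 1" and g="\<lambda>s. 1 / (s + 2*r - 1)" and
      F="\<lambda>s. 1 / (2*r - 2 + 2*s + 2 * cf_K (\<lambda>n. (real n)^2 * r^2) (r - 1 + s))"]
  have g1: "1 / (s + 1) = 1 / ((1 - r) + s + r)" for s :: real by simp
  have f1: "1 / (2 - 2*r + 2*s + 2 * cf_K (\<lambda>n. (real n)^2 * r^2) (1 - r + s))
      = 1 / (2*(1 - r) + 2*s + 2 * cf_K (\<lambda>n. (real n)^2 * r^2) ((1 - r) + s))" for s :: real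
    by (simp add: right_diff_distrib)
  have g2: "1 / (s + 2*r - 1) = 1 / ((r - 1) + s + r)" for s :: real by (simp add: algebra_simps)
  have f2: "1 / (2*r - 2 + 2*s + 2 * cf_K (\<lambda>n. (real n)^2 * r^2) (r - 1 + s))
      = 1 / (2*(r - 1) + 2*s + 2 * cf_K (\<lambda>n. (real n)^2 * r^2) ((r - 1) + s))" for s :: real
    by (simp add: right_diff_distrib)
  note H1 = G1[OF assms pos1 g1 f1]
  note H2 = G2[OF assms pos2 g2 f2]
  show ?thesis unfolding Let_def using H1 H2 by blast
qed

end
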